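(* (i) There exists a measurable map $\Psi:\Gamma\to B$ such that for every $a\in\Gamma$, $\beta=\Psi(a)$ satisfies $a=\sigma\sigma'+\sigma\beta+\beta'\sigma'$. (ii) There exists a measurable map $\Phi:B\to\prod_{i=1}^d[-\kappa^-_i,\kappa^+_i]$ such that $v_i\beta+\Phi(\beta)\in\prod_{j=1}^d[-\kappa^-_j,\kappa^+_j]$ for all $i=1,\dots,d+1$ and all $\beta\in B$.
   Context: Let $\sigma$ be an invertible $d\times d$ matrix, $\kappa^\pm_i\ge0$ for $i=1,\dots,d$, and $v_1,\dots,v_{d+1}\in\mathbb{R}^d$ row vectors forming a regular simplex with $\langle v_i,v_j\rangle=-1$ ($i\ne j$), $\sum_j v_j=0$, $\sum_j v_j'v_j=(d+1)I$. $B$ is the set of $d\times d$ matrices $\beta=[\beta_1\cdots\beta_d]$ whose $k$-th column is $\beta_k=\sum_{j=1}^{d+1}w_{jk}v_j'$ for some $w_{jk}\in[0,(\kappa^+_k+\kappa^-_k)/(d+1)]$, and $\Gamma=\{\sigma\sigma'+\sigma\beta+\beta'\sigma':\beta\in B\}$. $v_i\beta$ is the row vector obtained by multiplying the row vector $v_i$ by $\beta$. *)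

theory Defs
  imports "HOL-Analysis.Analysis"
begin

text \<open>Dimension d = CARD('n). Matrices are real^'n^'n (row-major: A $ row $ col).
  The simplex vectors v_1..v_{d+1} are indexed by j in {1..CARD('n)+1}.\<close>

definition regular_simplex :: "(nat \<Rightarrow> real^'n::finite) \<Rightarrow> bool" where
  "regular_simplex v \<longleftrightarrow>
     (\<forall>i\<in>{1..CARD('n)+1}. \<forall>j\<in>{1..CARD('n)+1}. i \<noteq> j \<longrightarrow> inner (v i) (v j) = -1) \<and>
     (\<Sum>j\<in>{1..CARD('n)+1}. v j) = 0 \<and>
     (\<Sum>j\<in>{1..CARD('n)+1}. (\<chi> a b. v j $ a * v j $ b)) = real (CARD('n)+1) *\<^sub>R mat 1"

definition Bset :: "(nat \<Rightarrow> real^'n::finite) \<Rightarrow> ('n \<Rightarrow> real) \<Rightarrow> ('n \<Rightarrow> real) \<Rightarrow> (real^'n^'n) set" where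
  "Bset v kp km = {\<beta>. \<exists>w :: nat \<Rightarrow> 'n \<Rightarrow> real.
      (\<forall>j\<in>{1..CARD('n)+1}. \<forall>k. 0 \<le> w j k \<and> w j k \<le> (kp k + km k) / real (CARD('n)+1)) \<and>
      (\<forall>a k. \<beta> $ a $ k = (\<Sum>j\<in>{1..CARD('n)+1}. w j k * v j $ a))}"

definition Gammaset :: "real^'n^'n \<Rightarrow> (nat \<Rightarrow> real^'n::finite) \<Rightarrow> ('n \<Rightarrow> real) \<Rightarrow> ('n \<Rightarrow> real) \<Rightarrow> (real^'n^'n) set" where
  "Gammaset \<sigma> v kp km = {\<sigma> ** transpose \<sigma> + \<sigma> ** \<beta> + transpose \<beta> ** transpose \<sigma> | \<beta>. \<beta> \<in> Bset v kp km}"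

definition kbox :: "('n::finite \<Rightarrow> real) \<Rightarrow> ('n \<Rightarrow> real) \<Rightarrow> (real^'n) set" where
  "kbox kp km = {x. \<forall>j. - km j \<le> x $ j \<and> x $ j \<le> kp j}"

end

theory Submission
  imports Defs
begin

lemma le_of_eps:
  fixes x y :: real
  assumes "\<And>n::nat. x \<le> y + 1 / (real n + 1)"
  shows "x \<le> y"
proof (rule ccontr)
  assume "\<not> x \<le> y"
  then have "x - y > 0" by simp
  then obtain n where "inverse (real (Suc n)) < x - y" using reals_Archimedean by blast
  with assms[of n] show False by (simp add: field_simps)
qed

lemma selection:
  fixes f :: "'a::euclidean_space \<Rightarrow> 'b::euclidean_space"
  assumes lin: "linear f" and cB: "compact B" and cvB: "convex B"
  shows "\<exists>\<Psi>. \<Psi> \<in> restrict_space borel ((\<lambda>x. c + f x) ` B) \<rightarrow>\<^sub>M restrict_space borel B \<and>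
     (\<forall>a\<in>(\<lambda>x. c + f x) ` B. \<Psi> a \<in> B \<and> a = c + f (\<Psi> a))"
proof -
  define L where "L x = c + f x" for x
  have contL: "continuous_on S L" for S
    unfolding L_def using lin
    by (intro continuous_intros linear_continuous_on linear_conv_bounded_linear[THEN iffD1])
  define G where "G = L ` B"
  have minex: "\<exists>\<beta>\<in>B\<inter>C. L \<beta> = a \<and> (\<forall>\<beta>'\<in>B\<inter>C. L \<beta>' = a \<longrightarrow> norm \<beta> \<le> norm \<beta>')"
    if C: "closed C" and a: "a \<in> L ` (B \<inter> C)" for C a
  proof -
    have "closed {\<beta>. L \<beta> = a}"
      using continuous_closed_preimage_constant[OF contL[of UNIV] closed_UNIV, of a] by (simp add: vimage_def)
    then have "compact (B \<inter> C \<inter> {\<beta>. L \<beta> = a})"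
      using cB C by (simp add: compact_Int_closed closed_Int)
    moreover have "B \<inter> C \<inter> {\<beta>. L \<beta> = a} \<noteq> {}" using a by auto
    ultimately obtain x where "x \<in> B \<inter> C \<inter> {\<beta>. L \<beta> = a}" "\<forall>y\<in>B \<inter> C \<inter> {\<beta>. L \<beta> = a}. norm x \<le> norm y"
      using continuous_attains_inf[of "B \<inter> C \<inter> {\<beta>. L \<beta> = a}" norm]
      by (meson continuous_on_norm_id)
    then show ?thesis by auto
  qed
  have uniq: "b1 = b2" if b1: "b1 \<in> B" "L b1 = a" "\<forall>\<beta>'\<in>B. L \<beta>' = a \<longrightarrow> norm b1 \<le> norm \<beta>'"
    and b2: "b2 \<in> B" "L b2 = a" "\<forall>\<beta>'\<in>B. L \<beta>' = a \<longrightarrow> norm b2 \<le> norm \<beta>'" for a b1 b2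
  proof -
    have eq: "norm b1 = norm b2" using b1 b2 by force
    define m where "m = (1/2) *\<^sub>R b1 + (1/2) *\<^sub>R b2"
    have "m \<in> B" unfolding m_def using cvB b1 b2 by (intro convexD) auto
    moreover have "L m = a"
    proof -
      have "f m = (1/2) *\<^sub>R f b1 + (1/2) *\<^sub>R f b2"
        unfolding m_def by (simp add: linear_add[OF lin] linear_scale[OF lin])
      moreover have "f b1 = a - c" "f b2 = a - c" using b1 b2 unfolding L_def by auto
      ultimately have "f m = a - c" by (simp add: scaleR_add_right[symmetric])
      then show ?thesis unfolding L_def by simp
    qed
    ultimately have "norm b1 \<le> norm m" using b1 by auto
    then have "(norm b1)^2 \<le> (norm m)^2" by (simp add: power_mono)
    moreover have "(norm (b1 + b2))^2 + (norm (b1 - b2))^2 = 2*(norm b1)^2 + 2*(norm b2)^2"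
      by (simp add: power2_norm_eq_inner inner_add_left inner_add_right inner_diff_left inner_diff_right inner_commute)
    moreover have "(norm m)^2 = (norm (b1+b2))^2 / 4"
      unfolding m_def by (simp add: scaleR_add_right[symmetric] power_divide)
    moreover have "(norm b1)^2 = (norm b2)^2" using eq by simp
    ultimately have "(norm (b1 - b2))^2 \<le> 0" by linarith
    then show ?thesis by simp
  qed
  define \<Psi> where "\<Psi> a = (SOME \<beta>. \<beta> \<in> B \<and> L \<beta> = a \<and> (\<forall>\<beta>'\<in>B. L \<beta>' = a \<longrightarrow> norm \<beta> \<le> norm \<beta>'))" for a
  have PsiP: "\<Psi> a \<in> B \<and> L (\<Psi> a) = a \<and> (\<forall>\<beta>'\<in>B. L \<beta>' = a \<longrightarrow> norm (\<Psi> a) \<le> norm \<beta>')" if "a \<in> G" for a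
  proof -
    have "\<exists>\<beta>. \<beta> \<in> B \<and> L \<beta> = a \<and> (\<forall>\<beta>'\<in>B. L \<beta>' = a \<longrightarrow> norm \<beta> \<le> norm \<beta>')"
      using minex[of UNIV a] that unfolding G_def by auto
    then show ?thesis unfolding \<Psi>_def by (rule someI_ex)
  qed
  have PsiC: "\<Psi> a \<in> C \<longleftrightarrow> (\<exists>\<beta>\<in>B\<inter>C. L \<beta> = a \<and> norm \<beta> \<le> norm (\<Psi> a))" if "a \<in> G" for a C
  proof
    assume "\<Psi> a \<in> C" then show "\<exists>\<beta>\<in>B\<inter>C. L \<beta> = a \<and> norm \<beta> \<le> norm (\<Psi> a)" using PsiP[OF that] by auto
  next
    assume "\<exists>\<beta>\<in>B\<inter>C. L \<beta> = a \<and> norm \<beta> \<le> norm (\<Psi> a)"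
    then obtain \<beta> where b: "\<beta> \<in> B" "\<beta> \<in> C" "L \<beta> = a" "norm \<beta> \<le> norm (\<Psi> a)" by auto
    have "\<forall>\<beta>'\<in>B. L \<beta>' = a \<longrightarrow> norm \<beta> \<le> norm \<beta>'" using b PsiP[OF that] by force
    then have "\<beta> = \<Psi> a" using uniq[of \<beta> a "\<Psi> a"] b PsiP[OF that] by auto
    then show "\<Psi> a \<in> C" using b by simp
  qed
  define K where "K r C = L ` {\<beta>\<in>B\<inter>C. norm \<beta> \<le> r}" for r C
  have Kc: "closed (K r C)" if "closed C" for r C
  proof -
    have "{\<beta>\<in>B\<inter>C. norm \<beta> \<le> r} = B \<inter> (C \<inter> cball 0 r)" by auto
    then have "compact {\<beta>\<in>B\<inter>C. norm \<beta> \<le> r}" using cB that by (simp add: compact_Int_closed closed_Int)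
    then show ?thesis unfolding K_def by (intro compact_imp_closed compact_continuous_image contL)
  qed
  have Gc: "closed G" unfolding G_def by (intro compact_imp_closed compact_continuous_image contL cB)
  have setsI: "G \<inter> S \<in> sets (restrict_space borel G)" if "closed S" for S
    using Gc that by (subst sets_restrict_space_iff) auto
  have spG[simp]: "space (restrict_space borel G) = G" by (simp add: space_restrict_space)
  define g where "g a = norm (\<Psi> a)" for a
  have gm: "g \<in> borel_measurable (restrict_space borel G)"
  proof (rule borel_measurableI_le)
    fix t
    have "{x \<in> space (restrict_space borel G). g x \<le> t} = G \<inter> K t UNIV"
    proof safe
      fix x assume "x \<in> space (restrict_space borel G)" "g x \<le> t"
      then have x: "x \<in> G" by simp
      then show "x \<in> G" .
      show "x \<in> K t UNIV" unfolding K_def using PsiP[OF x] \<open>g x \<le> t\<close> unfolding g_def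
        by (intro image_eqI[of _ _ "\<Psi> x"]) auto
    next
      fix x assume "x \<in> G" "x \<in> K t UNIV"
      then obtain \<beta> where "\<beta> \<in> B" "norm \<beta> \<le> t" "x = L \<beta>" unfolding K_def by auto
      then show "g x \<le> t" using PsiP[OF \<open>x \<in> G\<close>] unfolding g_def by force
    next
      fix x assume "x \<in> G" then show "x \<in> space (restrict_space borel G)" by simp
    qed
    then show "{x \<in> space (restrict_space borel G). g x \<le> t} \<in> sets (restrict_space borel G)"
      using setsI[OF Kc[OF closed_UNIV]] by simp
  qed
  have closedset: "{a\<in>G. \<Psi> a \<in> C} \<in> sets (restrict_space borel G)" if C: "closed C" for C
  proof -
    have "{a\<in>G. \<Psi> a \<in> C} = {a\<in>G. \<forall>n::nat. \<exists>k::int. a \<in> K (real_of_int k / (real n + 1)) C \<and> real_of_int k / (real n + 1) \<le> g a + 1/(real n + 1)}"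
    proof (intro set_eqI iffI)
      fix a assume "a \<in> {a\<in>G. \<Psi> a \<in> C}"
      then have a: "a \<in> G" "\<Psi> a \<in> C" by auto
      have "\<exists>k::int. a \<in> K (real_of_int k / (real n + 1)) C \<and> real_of_int k / (real n + 1) \<le> g a + 1/(real n + 1)" for n :: nat
      proof -
      define N where "N = real n + 1"
      have pos: "N > 0" unfolding N_def by simp
      define k where "k = \<lceil>g a * N\<rceil>"
      have kk: "g a * N \<le> k" "k < g a * N + 1" unfolding k_def by linarith+
      have k1: "g a \<le> k/N" using kk pos_le_divide_eq[OF pos] by simp
      have "k/N \<le> (g a*N+1)/N" using kk pos by (intro divide_right_mono) auto
      also have "(g a*N+1)/N = g a + 1/N" using pos by (simp add: add_divide_distrib)
      finally have k2: "k/N \<le> g a + 1/N" .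
      note k1 = k1[unfolded N_def] and k2 = k2[unfolded N_def]
      have "a \<in> K (real_of_int k / (real n + 1)) C" unfolding K_def using PsiP[OF a(1)] a k1 unfolding g_def
        by (intro image_eqI[of _ _ "\<Psi> a"]) auto
      then show "\<exists>k::int. a \<in> K (real_of_int k / (real n + 1)) C \<and> real_of_int k / (real n + 1) \<le> g a + 1/(real n + 1)" using k2 by blast
      qed
      then show "a \<in> {a\<in>G. \<forall>n::nat. \<exists>k::int. a \<in> K (real_of_int k / (real n + 1)) C \<and> real_of_int k / (real n + 1) \<le> g a + 1/(real n + 1)}"
        using a by blast
    next
      fix a assume "a \<in> {a\<in>G. \<forall>n::nat. \<exists>k::int. a \<in> K (real_of_int k / (real n + 1)) C \<and> real_of_int k / (real n + 1) \<le> g a + 1/(real n + 1)}"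
      then have a: "a \<in> G" and H: "\<forall>n::nat. \<exists>k::int. a \<in> K (real_of_int k / (real n + 1)) C \<and> real_of_int k / (real n + 1) \<le> g a + 1/(real n + 1)" by auto
      have H': "\<exists>\<beta>\<in>B\<inter>C. L \<beta> = a \<and> norm \<beta> \<le> g a + 1/(real n + 1)" for n::nat
        using H[rule_format, of n] unfolding K_def by force
      then have "a \<in> L ` (B \<inter> C)" by (metis image_eqI)
      from minex[OF C this] obtain \<beta> where b: "\<beta> \<in> B\<inter>C" "L \<beta> = a"
        "\<forall>\<beta>'\<in>B\<inter>C. L \<beta>' = a \<longrightarrow> norm \<beta> \<le> norm \<beta>'" by blast
      have "norm \<beta> \<le> g a + 1/(real n + 1)" for n
        using H'[of n] b by fastforce
      then have "norm \<beta> \<le> g a" by (rule le_of_eps)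
      then have "\<Psi> a \<in> C" using PsiC[OF a, of C] b unfolding g_def by blast
      then show "a \<in> {a\<in>G. \<Psi> a \<in> C}" using a by blast
    qed
    also have "\<dots> \<in> sets (restrict_space borel G)"
    proof -
      have s1: "{a \<in> space (restrict_space borel G). a \<in> K r C} \<in> sets (restrict_space borel G)" for r
        using setsI[OF Kc[OF C]] by (simp add: Int_def conj_commute)
      have s2: "{a \<in> space (restrict_space borel G). q \<le> g a + e} \<in> sets (restrict_space borel G)" for q e
        using gm by measurable
      have "{a \<in> space (restrict_space borel G). \<forall>n::nat. \<exists>k::int. a \<in> K (real_of_int k / (real n + 1)) C \<and> real_of_int k / (real n + 1) \<le> g a + 1/(real n + 1)}
            \<in> sets (restrict_space borel G)"
        by (intro sets.sets_Collect_countable_All sets.sets_Collect_countable_Ex sets.sets_Collect_conj s1 s2)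
      then show ?thesis by simp
    qed
    finally show ?thesis .
  qed
  have "\<Psi> \<in> borel_measurable (restrict_space borel G)"
  proof (subst borel_measurable_iff_halfspace_le, intro ballI allI)
    fix i :: 'a and t
    have "{w \<in> space (restrict_space borel G). \<Psi> w \<bullet> i \<le> t} = {a\<in>G. \<Psi> a \<in> {x. i \<bullet> x \<le> t}}"
      by (auto simp: inner_commute)
    then show "{w \<in> space (restrict_space borel G). \<Psi> w \<bullet> i \<le> t} \<in> sets (restrict_space borel G)"
      using closedset[OF closed_halfspace_le] by simp
  qed
  then have "\<Psi> \<in> restrict_space borel G \<rightarrow>\<^sub>M restrict_space borel B"
    by (intro measurable_restrict_space2) (use PsiP in auto)
  then show ?thesis unfolding G_def L_def using PsiP unfolding G_def L_def by (intro exI[of _ \<Psi>]) auto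
qed

lemma msum_compact:
  fixes F :: "'i \<Rightarrow> 'a::real_normed_vector set"
  assumes "finite S" "\<And>s. s\<in>S \<Longrightarrow> compact (F s)"
  shows "compact {sum x S | x. \<forall>s\<in>S. x s \<in> F s}"
  using assms
proof (induction S rule: finite_induct)
  case empty
  have "{sum x {} | x. \<forall>s\<in>{}. x s \<in> F s} = {0::'a}" by auto
  then show ?case by simp
next
  case (insert s S)
  have "{sum x (insert s S) | x. \<forall>t\<in>insert s S. x t \<in> F t} =
        {a + b | a b. a \<in> F s \<and> b \<in> {sum x S | x. \<forall>t\<in>S. x t \<in> F t}}"
  proof (intro set_eqI iffI)
    fix z assume "z \<in> {sum x (insert s S) | x. \<forall>t\<in>insert s S. x t \<in> F t}"
    then obtain x where "z = sum x (insert s S)" "\<forall>t\<in>insert s S. x t \<in> F t" by auto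
    then show "z \<in> {a + b | a b. a \<in> F s \<and> b \<in> {sum x S | x. \<forall>t\<in>S. x t \<in> F t}}"
      using insert by auto
  next
    fix z assume "z \<in> {a + b | a b. a \<in> F s \<and> b \<in> {sum x S | x. \<forall>t\<in>S. x t \<in> F t}}"
    then obtain a y where z: "z = a + sum y S" "a \<in> F s" "\<forall>t\<in>S. y t \<in> F t" by auto
    have "sum (y(s := a)) S = sum y S" using insert(2) by (intro sum.cong) auto
    then have "z = sum (y(s:=a)) (insert s S)" using z insert(1,2) by simp
    moreover have "\<forall>t\<in>insert s S. (y(s:=a)) t \<in> F t" using z by auto
    ultimately show "z \<in> {sum x (insert s S) | x. \<forall>t\<in>insert s S. x t \<in> F t}" by blast
  qed
  moreover have "compact {a + b | a b. a \<in> F s \<and> b \<in> {sum x S | x. \<forall>t\<in>S. x t \<in> F t}}"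
    using insert by (intro compact_sums) auto
  ultimately show ?case by simp
qed

lemma vm_comp:
  fixes v :: "nat \<Rightarrow> real^'n::finite" and w :: "nat \<Rightarrow> 'n \<Rightarrow> real" and \<beta> :: "real^'n^'n"
  assumes "\<forall>a k. \<beta> $ a $ k = (\<Sum>j\<in>J. w j k * v j $ a)"
  shows "(x v* \<beta>) $ k = (\<Sum>j\<in>J. w j k * inner (v j) x)"
  using assms
  by (simp add: vector_matrix_mult_def inner_vec_def sum_distrib_left sum_distrib_right
      sum.swap[of _ J UNIV] algebra_simps)

lemma simplex_inner:
  fixes v :: "nat \<Rightarrow> real^'n::finite"
  assumes rs: "regular_simplex v" and i: "i \<in> {1..CARD('n)+1}" and j: "j \<in> {1..CARD('n)+1}"
  shows "inner (v j) (v i) = (if j = i then real CARD('n) else -1)"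
proof (cases "j = i")
  case False then show ?thesis using rs i j unfolding regular_simplex_def by auto
next
  case True
  let ?J = "{1..CARD('n)+1}"
  have "0 = inner (v i) (\<Sum>j\<in>?J. v j)" using rs unfolding regular_simplex_def by simp
  also have "\<dots> = (\<Sum>j\<in>?J. inner (v i) (v j))" by (rule inner_sum_right)
  also have "\<dots> = inner (v i) (v i) + (\<Sum>j\<in>?J - {i}. inner (v i) (v j))"
    using i by (intro sum.remove) auto
  also have "(\<Sum>j\<in>?J - {i}. inner (v i) (v j)) = (\<Sum>j\<in>?J - {i}. -1)"
    using rs i unfolding regular_simplex_def by (intro sum.cong) auto
  also have "\<dots> = - real CARD('n)" using i by simp
  finally show ?thesis using True by simp
qed

lemma vm_formula:
  fixes v :: "nat \<Rightarrow> real^'n::finite" and w :: "nat \<Rightarrow> 'n \<Rightarrow> real" and \<beta> :: "real^'n^'n"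
  assumes rs: "regular_simplex v" and i: "i \<in> {1..CARD('n)+1}"
    and b: "\<forall>a k. \<beta> $ a $ k = (\<Sum>j\<in>{1..CARD('n)+1}. w j k * v j $ a)"
  shows "(v i v* \<beta>) $ k = real (CARD('n)+1) * w i k - (\<Sum>j\<in>{1..CARD('n)+1}. w j k)"
proof -
  let ?J = "{1..CARD('n)+1}"
  have "(v i v* \<beta>) $ k = (\<Sum>j\<in>?J. w j k * inner (v j) (v i))" by (rule vm_comp[OF b])
  also have "\<dots> = (\<Sum>j\<in>?J. real (CARD('n)+1) * (if j = i then w j k else 0) - w j k)"
    using simplex_inner[OF rs i] by (intro sum.cong) (auto simp: algebra_simps)
  also have "\<dots> = real (CARD('n)+1) * w i k - (\<Sum>j\<in>?J. w j k)"
    using i by (simp add: sum_subtractf sum_distrib_left[symmetric])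
  finally show ?thesis .
qed

lemma continuous_on_Min_fin:
  fixes f :: "'i \<Rightarrow> 'a::topological_space \<Rightarrow> real"
  assumes "finite I" "I \<noteq> {}" "\<And>i. i \<in> I \<Longrightarrow> continuous_on S (f i)"
  shows "continuous_on S (\<lambda>x. Min ((\<lambda>i. f i x) ` I))"
  using assms
proof (induction I rule: finite_ne_induct)
  case (singleton i) then show ?case by simp
next
  case (insert i I)
  have "continuous_on S (\<lambda>x. min (f i x) (Min ((\<lambda>i. f i x) ` I)))"
    using insert by (intro continuous_on_min) auto
  then show ?case using insert by simp
qed

lemma vmc: "continuous_on UNIV (\<lambda>\<beta>::real^'n::finite^'n. (x v* \<beta>) $ k)"
  unfolding vector_matrix_mult_def by (simp, intro continuous_intros)


lemma part2:
  fixes kp km :: "'n::finite \<Rightarrow> real" and v :: "nat \<Rightarrow> real^'n"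
  assumes rs: "regular_simplex v" and kp: "\<forall>k. kp k \<ge> 0" and km: "\<forall>k. km k \<ge> 0"
  shows "\<exists>\<Phi>. \<Phi> \<in> restrict_space borel (Bset v kp km) \<rightarrow>\<^sub>M restrict_space borel (kbox kp km) \<and>
            (\<forall>\<beta>\<in>Bset v kp km. \<Phi> \<beta> \<in> kbox kp km \<and>
               (\<forall>i\<in>{1..CARD('n)+1}. v i v* \<beta> + \<Phi> \<beta> \<in> kbox kp km))"
proof -
  define J where "J = {1..CARD('n)+1}"
  have J: "finite J" "J \<noteq> {}" unfolding J_def by auto
  have cJ: "card J = CARD('n) + 1" unfolding J_def by simp
  define \<Phi> where "\<Phi> \<beta> = (\<chi> k. - km k - Min ((\<lambda>i. (v i v* \<beta>)$k) ` J))" for \<beta> :: "real^'n^'n"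
  have cont: "continuous_on UNIV \<Phi>"
    unfolding \<Phi>_def by (intro continuous_on_vec_lambda continuous_on_diff continuous_on_const continuous_on_Min_fin vmc J)
  have key: "\<Phi> \<beta> \<in> kbox kp km \<and> (\<forall>i\<in>J. v i v* \<beta> + \<Phi> \<beta> \<in> kbox kp km)" if b: "\<beta> \<in> Bset v kp km" for \<beta>
  proof -
    obtain w where w: "\<forall>j\<in>J. \<forall>k. 0 \<le> w j k \<and> w j k \<le> (kp k + km k) / real (CARD('n)+1)"
      and wb: "\<forall>a k. \<beta> $ a $ k = (\<Sum>j\<in>J. w j k * v j $ a)"
      using b unfolding Bset_def J_def by auto
    define d1 where "d1 = real (CARD('n)+1)"
    have d1: "d1 > 0" unfolding d1_def by simp
    have comp: "\<Phi> \<beta> $ k \<in> {- km k..kp k} \<and> (\<forall>i\<in>J. (v i v* \<beta>)$k + \<Phi> \<beta> $ k \<in> {- km k..kp k})" for k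
    proof -
      define S where "S = (\<Sum>j\<in>J. w j k)"
      define x where "x i = (v i v* \<beta>)$k" for i
      have xf: "x i = d1 * w i k - S" if "i \<in> J" for i
        unfolding x_def d1_def S_def using vm_formula[OF rs, of i \<beta> w k] that wb unfolding J_def by auto
      define m where "m = Min (x ` J)"
      have mle: "m \<le> x i" if "i \<in> J" for i unfolding m_def using J that by auto
      have "m \<in> x ` J" unfolding m_def using J by (intro Min_in) auto
      then obtain i0 where i0: "i0 \<in> J" "m = x i0" by auto
      have c: "d1 * ((kp k + km k) / real (CARD('n)+1)) = kp k + km k" unfolding d1_def by simp
      have "m \<ge> - S" using xf[OF i0(1)] i0 w d1 by (simp add: mult_nonneg_nonneg)
      have "sum x J = d1 * S - real (card J) * S" 
        using xf by (simp add: sum_subtractf sum_distrib_left[symmetric] S_def)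
      then have sx: "sum x J = 0" using cJ unfolding d1_def by simp
      have "real (card J) * m \<le> sum x J" using mle by (intro sum_bounded_below) auto
      then have "m \<le> 0" using sx cJ by (simp add: mult_le_0_iff)
      have "S \<le> real (card J) * ((kp k + km k) / real (CARD('n)+1))"
        unfolding S_def using w by (intro sum_bounded_above) auto
      then have "S \<le> kp k + km k" using cJ by simp
      have xm: "x i - m \<le> kp k + km k" if "i \<in> J" for i
      proof -
        have "x i - m = d1 * (w i k - w i0 k)" using xf[OF that] xf[OF i0(1)] i0 by (simp add: algebra_simps)
        also have "\<dots> \<le> d1 * ((kp k + km k) / real (CARD('n)+1))"
        proof -
          have "0 \<le> w i0 k" "w i k \<le> (kp k + km k) / real (CARD('n)+1)" using w that i0 by auto
          then show ?thesis using d1 by (intro mult_left_mono) auto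
        qed
        finally show ?thesis using c by simp
      qed
      have Pk: "\<Phi> \<beta> $ k = - km k - m" unfolding \<Phi>_def m_def x_def by simp
      have A: "\<Phi> \<beta> $ k \<in> {- km k..kp k}" using Pk \<open>m \<ge> - S\<close> \<open>m \<le> 0\<close> \<open>S \<le> kp k + km k\<close> by auto
      have B: "(v i v* \<beta>)$k + \<Phi> \<beta> $ k \<in> {- km k..kp k}" if "i \<in> J" for i
        using xm[OF that] mle[OF that] Pk unfolding x_def by auto
      show ?thesis using A B by blast
    qed
    then show ?thesis unfolding kbox_def by auto
  qed
  have "\<Phi> \<in> restrict_space borel (Bset v kp km) \<rightarrow>\<^sub>M restrict_space borel (kbox kp km)"
    by (intro measurable_restrict_space2 measurable_restrict_space1 borel_measurable_continuous_onI cont)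
       (use key in \<open>auto simp: space_restrict_space\<close>)
  then show ?thesis using key unfolding J_def by blast
qed

lemma sumE:
  fixes v :: "nat \<Rightarrow> real^'n::finite"
  defines "E \<equiv> \<lambda>j k. (\<chi> a b. if b = k then v j $ a else 0) :: real^'n^'n"
  assumes "finite J"
  shows "(sum (\<lambda>p. T p *\<^sub>R E (fst p) (snd p)) (J \<times> UNIV)) $ a $ b = (\<Sum>j\<in>J. T (j,b) * v j $ a)"
proof -
  have "(sum (\<lambda>p. T p *\<^sub>R E (fst p) (snd p)) (J \<times> UNIV)) $ a $ b
      = (\<Sum>p\<in>J \<times> UNIV. T p * (if b = snd p then v (fst p) $ a else 0))"
    unfolding E_def by simp
  also have "\<dots> = (\<Sum>j\<in>J. \<Sum>k\<in>UNIV. T (j,k) * (if b = k then v j $ a else 0))"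
    unfolding sum.cartesian_product by (intro sum.cong) auto
  also have "\<dots> = (\<Sum>j\<in>J. T (j,b) * v j $ a)"
    by (simp add: if_distrib cong: if_cong)
  finally show ?thesis .
qed

lemma Bset_compact:
  fixes v :: "nat \<Rightarrow> real^'n::finite"
  shows "compact (Bset v kp km)"
proof -
  define J where "J = {1..CARD('n)+1}"
  define c where "c k = (kp k + km k) / real (CARD('n)+1)" for k
  define E where "E = (\<lambda>j k. (\<chi> a b. if b = k then v j $ a else 0) :: real^'n^'n)"
  define F where "F p = (\<lambda>t. t *\<^sub>R E (fst p) (snd p)) ` {0..c (snd p)}" for p
  have fJ: "finite J" unfolding J_def by simp
  have "Bset v kp km = {sum X (J \<times> UNIV) | X. \<forall>p\<in>J \<times> UNIV. X p \<in> F p}"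
  proof (intro set_eqI iffI)
    fix \<beta> assume "\<beta> \<in> Bset v kp km"
    then obtain w where w: "\<forall>j\<in>J. \<forall>k. 0 \<le> w j k \<and> w j k \<le> c k"
      and wb: "\<forall>a k. \<beta> $ a $ k = (\<Sum>j\<in>J. w j k * v j $ a)"
      unfolding Bset_def J_def c_def by auto
    define X where "X p = w (fst p) (snd p) *\<^sub>R E (fst p) (snd p)" for p
    have "\<beta> = sum X (J \<times> UNIV)"
      unfolding X_def using sumE[OF fJ, of "\<lambda>p. w (fst p) (snd p)" v] wb unfolding E_def
      by (simp add: vec_eq_iff)
    moreover have "\<forall>p\<in>J \<times> UNIV. X p \<in> F p" unfolding X_def F_def using w by auto
    ultimately show "\<beta> \<in> {sum X (J \<times> UNIV) | X. \<forall>p\<in>J \<times> UNIV. X p \<in> F p}" by blast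
  next
    fix \<beta> assume "\<beta> \<in> {sum X (J \<times> UNIV) | X. \<forall>p\<in>J \<times> UNIV. X p \<in> F p}"
    then obtain X where X: "\<beta> = sum X (J \<times> UNIV)" "\<forall>p\<in>J \<times> UNIV. X p \<in> F p" by auto
    then have "\<forall>p\<in>J \<times> UNIV. \<exists>t. t \<in> {0..c (snd p)} \<and> X p = t *\<^sub>R E (fst p) (snd p)"
      unfolding F_def by (fastforce simp: image_iff)
    then obtain T where T: "\<forall>p\<in>J \<times> UNIV. T p \<in> {0..c (snd p)} \<and> X p = T p *\<^sub>R E (fst p) (snd p)"
      by metis
    have "\<beta> = sum (\<lambda>p. T p *\<^sub>R E (fst p) (snd p)) (J \<times> UNIV)"
      using X(1) T by (auto intro: sum.cong)
    then have "\<forall>a k. \<beta> $ a $ k = (\<Sum>j\<in>J. T (j,k) * v j $ a)"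
      using sumE[OF fJ, of T v] unfolding E_def by simp
    moreover have "\<forall>j\<in>J. \<forall>k. 0 \<le> T (j,k) \<and> T (j,k) \<le> c k" using T by auto
    ultimately show "\<beta> \<in> Bset v kp km" unfolding Bset_def J_def c_def
      by (intro CollectI exI[of _ "\<lambda>j k. T (j,k)"]) auto
  qed
  moreover have "compact {sum X (J \<times> UNIV) | X. \<forall>p\<in>J \<times> UNIV. X p \<in> F p}"
    using fJ unfolding F_def
    by (intro msum_compact compact_continuous_image continuous_intros) auto
  ultimately show ?thesis by simp
qed

lemma Bset_convex:
  fixes v :: "nat \<Rightarrow> real^'n::finite"
  shows "convex (Bset v kp km)"
  unfolding convex_def
proof (intro ballI allI impI)
  fix x y :: "real^'n^'n" and u v' :: real
  assume x: "x \<in> Bset v kp km" and y: "y \<in> Bset v kp km" and uv: "0 \<le> u" "0 \<le> v'" "u + v' = 1"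
  obtain w1 where w1: "\<forall>j\<in>{1..CARD('n)+1}. \<forall>k. 0 \<le> w1 j k \<and> w1 j k \<le> (kp k + km k) / real (CARD('n)+1)"
    "\<forall>a k. x $ a $ k = (\<Sum>j\<in>{1..CARD('n)+1}. w1 j k * v j $ a)" using x unfolding Bset_def by auto
  obtain w2 where w2: "\<forall>j\<in>{1..CARD('n)+1}. \<forall>k. 0 \<le> w2 j k \<and> w2 j k \<le> (kp k + km k) / real (CARD('n)+1)"
    "\<forall>a k. y $ a $ k = (\<Sum>j\<in>{1..CARD('n)+1}. w2 j k * v j $ a)" using y unfolding Bset_def by auto
  show "u *\<^sub>R x + v' *\<^sub>R y \<in> Bset v kp km"
    unfolding Bset_def
  proof (intro CollectI exI[of _ "\<lambda>j k. u * w1 j k + v' * w2 j k"] conjI allI ballI)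
    fix j k assume j: "j \<in> {1..CARD('n)+1}"
    show "0 \<le> u * w1 j k + v' * w2 j k" using w1 w2 j uv by (simp add: add_nonneg_nonneg)
    show "u * w1 j k + v' * w2 j k \<le> (kp k + km k) / real (CARD('n)+1)"
      using w1(1) w2(1) j uv by (intro convex_bound_le) auto
  next
    fix a k
    show "(u *\<^sub>R x + v' *\<^sub>R y) $ a $ k = (\<Sum>j\<in>{1..CARD('n)+1}. (u * w1 j k + v' * w2 j k) * v j $ a)"
      using w1(2) w2(2) by (simp add: sum.distrib sum_distrib_left algebra_simps)
  qed
qed

lemma lin_f:
  fixes \<sigma> :: "real^'n::finite^'n"
  shows "linear (\<lambda>\<beta>. \<sigma> ** \<beta> + transpose \<beta> ** transpose \<sigma>)"
  by (intro linearI)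
     (simp_all add: vec_eq_iff matrix_matrix_mult_def transpose_def sum.distrib sum_distrib_left algebra_simps)

theorem lemma3p5:
  fixes \<sigma> :: "real^'n::finite^'n" and kp km :: "'n \<Rightarrow> real" and v :: "nat \<Rightarrow> real^'n"
  assumes "invertible \<sigma>"
    and "\<forall>k. kp k \<ge> 0" and "\<forall>k. km k \<ge> 0"
    and "regular_simplex v"
  shows "(\<exists>\<Psi>. \<Psi> \<in> restrict_space borel (Gammaset \<sigma> v kp km) \<rightarrow>\<^sub>M restrict_space borel (Bset v kp km) \<and>
            (\<forall>a\<in>Gammaset \<sigma> v kp km. \<Psi> a \<in> Bset v kp km \<and>
               a = \<sigma> ** transpose \<sigma> + \<sigma> ** \<Psi> a + transpose (\<Psi> a) ** transpose \<sigma>))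
       \<and> (\<exists>\<Phi>. \<Phi> \<in> restrict_space borel (Bset v kp km) \<rightarrow>\<^sub>M restrict_space borel (kbox kp km) \<and>
            (\<forall>\<beta>\<in>Bset v kp km. \<Phi> \<beta> \<in> kbox kp km \<and>
               (\<forall>i\<in>{1..CARD('n)+1}. v i v* \<beta> + \<Phi> \<beta> \<in> kbox kp km)))"
  proof -
  define c where "c = \<sigma> ** transpose \<sigma>"
  define f where "f = (\<lambda>\<beta>::real^'n^'n. \<sigma> ** \<beta> + transpose \<beta> ** transpose \<sigma>)"
  have G: "Gammaset \<sigma> v kp km = (\<lambda>x. c + f x) ` Bset v kp km"
    unfolding Gammaset_def c_def f_def by (auto simp: add.assoc)
  obtain \<Psi> where P1: "\<Psi> \<in> restrict_space borel ((\<lambda>x. c + f x) ` Bset v kp km) \<rightarrow>\<^sub>M restrict_space borel (Bset v kp km)"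
    and P2: "\<forall>a\<in>(\<lambda>x. c + f x) ` Bset v kp km. \<Psi> a \<in> Bset v kp km \<and> a = c + f (\<Psi> a)"
  proof -
    have "linear f" unfolding f_def by (rule lin_f)
    from selection[OF this Bset_compact[of v kp km] Bset_convex[of v kp km], where c=c]
    show ?thesis using that by blast
  qed
  have "\<exists>\<Psi>. \<Psi> \<in> restrict_space borel (Gammaset \<sigma> v kp km) \<rightarrow>\<^sub>M restrict_space borel (Bset v kp km) \<and>
            (\<forall>a\<in>Gammaset \<sigma> v kp km. \<Psi> a \<in> Bset v kp km \<and>
               a = \<sigma> ** transpose \<sigma> + \<sigma> ** \<Psi> a + transpose (\<Psi> a) ** transpose \<sigma>)"
    using P1 P2 unfolding G by (intro exI[of _ \<Psi>]) (auto simp: c_def f_def add.assoc)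
  moreover have "\<exists>\<Phi>. \<Phi> \<in> restrict_space borel (Bset v kp km) \<rightarrow>\<^sub>M restrict_space borel (kbox kp km) \<and>
            (\<forall>\<beta>\<in>Bset v kp km. \<Phi> \<beta> \<in> kbox kp km \<and>
               (\<forall>i\<in>{1..CARD('n)+1}. v i v* \<beta> + \<Phi> \<beta> \<in> kbox kp km))"
    using part2 assms by blast
  ultimately show ?thesis by blast
qed

end
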